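(* For $u\in\{0,1\}^3$ and $n\ge1$, let $f_u(X,Y,Z)=\bigoplus_{i=1}^n t_u(x_iy_iz_i)$, where Alice, Bob and Carol hold $X=(x_1,\dots,x_n)$, $Y=(y_1,\dots,y_n)$, $Z=(z_1,\dots,z_n)\in\{0,1\}^n$ respectively, $t_u(w)=1$ if $w=u$ and $0$ otherwise, and the inputs satisfy the promise that every triple $x_iy_iz_i$ has the same parity as $u$ (i.e. $x_i\oplus y_i\oplus z_i=u_1\oplus u_2\oplus u_3$ for all $i$). Then each of the eight functions $f_u$ can be computed by a deterministic classical protocol (no shared entanglement) with three bits of communication, at the end of which Alice knows the value; moreover, none of these eight functions can be computed by such a deterministic classical protocol with only two bits of communication.
   Context: In a deterministic classical communication protocol, the three parties have no shared randomness or entanglement and exchange classical bits; the cost is the total number of bits communicated, and the protocol must give the correct value for every input satisfying the promise. *)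

theory Defs
  imports Main
begin

datatype party = Alice | Bob | Carol

text \<open>Deterministic classical three-party protocols (no shared randomness or entanglement),
  in the broadcast (blackboard) model: at each internal node a designated party sends one bit,
  computed from its own input only (the position in the tree encodes the transcript so far);
  at a leaf, Alice outputs a value computed from her own input (the leaf encodes the transcript).\<close>
datatype 'i protocol =
    Output "'i \<Rightarrow> bool"
  | Send party "'i \<Rightarrow> bool" "'i protocol" "'i protocol"

definition input_of :: "party \<Rightarrow> 'i \<Rightarrow> 'i \<Rightarrow> 'i \<Rightarrow> 'i" where
  "input_of p x y z = (case p of Alice \<Rightarrow> x | Bob \<Rightarrow> y | Carol \<Rightarrow> z)"

fun run :: "'i protocol \<Rightarrow> 'i \<Rightarrow> 'i \<Rightarrow> 'i \<Rightarrow> bool" where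
  "run (Output g) x y z = g x"
| "run (Send p m P0 P1) x y z =
     (if m (input_of p x y z) then run P1 x y z else run P0 x y z)"

fun cost :: "'i protocol \<Rightarrow> nat" where
  "cost (Output g) = 0"
| "cost (Send p m P0 P1) = Suc (max (cost P0) (cost P1))"

definition xor3 :: "bool \<Rightarrow> bool \<Rightarrow> bool \<Rightarrow> bool" where
  "xor3 a b c = ((a \<noteq> b) \<noteq> c)"

definition promise :: "bool \<times> bool \<times> bool \<Rightarrow> nat \<Rightarrow> bool list \<Rightarrow> bool list \<Rightarrow> bool list \<Rightarrow> bool" where
  "promise u n X Y Z \<longleftrightarrow> length X = n \<and> length Y = n \<and> length Z = n \<and>
     (\<forall>i<n. xor3 (X ! i) (Y ! i) (Z ! i) = xor3 (fst u) (fst (snd u)) (snd (snd u)))"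

definition f :: "bool \<times> bool \<times> bool \<Rightarrow> bool list \<Rightarrow> bool list \<Rightarrow> bool list \<Rightarrow> bool" where
  "f u X Y Z = odd (card {i. i < length X \<and> (X ! i, Y ! i, Z ! i) = u})"

definition computes :: "bool \<times> bool \<times> bool \<Rightarrow> nat \<Rightarrow> bool list protocol \<Rightarrow> bool" where
  "computes u n P \<longleftrightarrow> (\<forall>X Y Z. promise u n X Y Z \<longrightarrow> run P X Y Z = f u X Y Z)"

end

theory Submission imports Defs begin

type_synonym vtx = "nat \<times> nat \<times> nat \<times> bool"
type_synonym edge = "vtx \<times> vtx"

definition inp :: "party \<Rightarrow> vtx \<Rightarrow> nat" where
  "inp p w = input_of p (fst w) (fst (snd w)) (fst (snd (snd w)))"

definition val :: "vtx \<Rightarrow> bool" where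
  "val w = snd (snd (snd w))"

fun halfsubs :: "'a list \<Rightarrow> 'a list list" where
  "halfsubs [] = [[]]"
| "halfsubs (v # vs) = map ((#) v) (subseqs vs)"

definition LA :: "edge list" where "LA = [((0, 2, 2, False), (0, 3, 3, True)), ((0, 6, 6, True), (0, 7, 7, False)), ((1, 2, 3, True), (1, 7, 6, False)), ((4, 5, 1, True), (4, 7, 3, False)), ((6, 0, 6, True), (6, 7, 1, False)), ((4, 0, 4, False), (4, 5, 1, True))]"

definition TB :: "(edge \<times> edge \<times> edge) list" where "TB = [(((1, 0, 1, False), (1, 3, 2, True)), ((1, 3, 2, True), (1, 7, 6, False)), ((6, 7, 1, False), (6, 0, 6, True))), (((3, 0, 3, True), (3, 7, 4, False)), ((4, 7, 3, False), (4, 6, 2, True)), ((4, 6, 2, True), (4, 0, 4, False))), (((0, 2, 2, False), (0, 3, 3, True)), ((1, 3, 2, True), (1, 0, 1, False)), ((1, 0, 1, False), (1, 2, 3, True))), (((0, 2, 2, False), (0, 3, 3, True)), ((0, 3, 3, True), (0, 7, 7, False)), ((3, 7, 4, False), (3, 2, 1, True))), (((0, 3, 3, True), (0, 7, 7, False)), ((4, 7, 3, False), (4, 5, 1, True)), ((4, 5, 1, True), (4, 3, 7, False))), (((0, 6, 6, True), (0, 7, 7, False)), ((4, 7, 3, False), (4, 2, 6, True)), ((1, 2, 3, True), (1, 6, 7, False))), (((1, 0, 1, False), (1, 2, 3, True)), ((3, 2, 1, True), (3, 5, 6, False)), ((6, 5, 3, False), (6, 0, 6, True))), (((1, 5, 4,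 True), (1, 7, 6, False)), ((6, 7, 1, False), (6, 2, 4, True)), ((3, 2, 1, True), (3, 5, 6, False))), (((3, 0, 3, True), (3, 7, 4, False)), ((4, 7, 3, False), (4, 2, 6, True)), ((4, 2, 6, True), (4, 0, 4, False))), (((0, 2, 2, False), (0, 6, 6, True)), ((4, 6, 2, True), (4, 3, 7, False)), ((4, 3, 7, False), (4, 2, 6, True))), (((0, 2, 2, False), (0, 6, 6, True)), ((4, 6, 2, True), (4, 7, 3, False)), ((1, 7, 6, False), (1, 2, 3, True))), (((1, 0, 1, False), (1, 3, 2, True)), ((4, 3, 7, False), (4, 6, 2, True)), ((4, 6, 2, True), (4, 0, 4, False)))]"

definition TC :: "(edge \<times> edge \<times> edge) list" where "TC = [(((1, 0, 1, False), (1, 3, 2, True)), ((1, 3, 2, True), (1, 7, 6, False)), ((6, 0, 6, True), (6, 7, 1, False))), (((0, 3, 3, True), (0, 7, 7, False)), ((4, 3, 7, False), (4, 5, 1, True)), ((4, 5, 1, True), (4, 7, 3, False))), (((3, 0, 3, True), (3, 7, 4, False)), ((4, 0, 4, False), (4, 6, 2, True)), ((4, 6, 2, True), (4, 7, 3, False))), (((0, 2, 2, False), (0, 6, 6, True)), ((4, 2, 6, True), (4, 7, 3, False)), ((4, 7, 3, False), (4, 6, 2, True))), (((0, 2, 2, False), (0, 3, 3, True)), ((1, 2, 3, True), (1, 7, 6, False)), ((1, 7, 6, False), (1, 3, 2, True))), (((1, 5, 4, True), (1, 6, 7, False)), ((4, 3, 7, False), (4, 5, 1, True)), ((4, 5,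 1, True), (4, 0, 4, False))), (((0, 3, 3, True), (0, 7, 7, False)), ((4, 3, 7, False), (4, 2, 6, True)), ((6, 0, 6, True), (6, 5, 3, False))), (((0, 2, 2, False), (0, 3, 3, True)), ((1, 2, 3, True), (1, 0, 1, False)), ((1, 0, 1, False), (1, 3, 2, True))), (((0, 2, 2, False), (0, 3, 3, True)), ((1, 2, 3, True), (1, 6, 7, False)), ((4, 3, 7, False), (4, 6, 2, True))), (((1, 0, 1, False), (1, 2, 3, True)), ((3, 0, 3, True), (3, 5, 6, False)), ((3, 5, 6, False), (3, 2, 1, True))), (((1, 5, 4, True), (1, 7, 6, False)), ((3, 5, 6, False), (3, 2, 1, True)), ((6, 7, 1, False), (6, 2, 4, True))), (((1, 3, 2, True), (1, 6, 7, False)), ((4, 3, 7, False), (4, 2, 6, True)), ((1, 7, 6, False), (1, 3, 2, True))), (((3, 2, 1, True), (3, 7, 4, False)), ((4, 0, 4, False), (4, 2, 6, True)), ((6, 0, 6, True), (6, 7, 1, False))), (((1, 5, 4, True), (1, 7, 6, False)), ((3, 5, 6, False), (3, 0, 3, True)), ((6, 5, 3, False), (6, 2, 4, True)))]"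

definition Loops :: "party \<Rightarrow> edge list" where
  "Loops q = (case q of Alice \<Rightarrow> LA | _ \<Rightarrow> [])"

definition Tris :: "party \<Rightarrow> (edge \<times> edge \<times> edge) list" where
  "Tris q = (case q of Alice \<Rightarrow> [] | Bob \<Rightarrow> TB | Carol \<Rightarrow> TC)"

definition allE :: "edge list" where
  "allE = LA @ concat (map (\<lambda>(a, b, c). [a, b, c]) (TB @ TC))"

definition vals :: "party \<Rightarrow> nat list" where
  "vals p = remdups (map (inp p \<circ> fst) allE @ map (inp p \<circ> snd) allE)"

definition bad1 :: "party \<Rightarrow> (edge \<Rightarrow> bool) \<Rightarrow> bool" where
  "bad1 q P = (list_ex (\<lambda>e. P e \<and> inp q (fst e) = inp q (snd e)) (Loops q) \<or>
     list_ex (\<lambda>(e1, e2, e3). P e1 \<and> P e2 \<and> P e3 \<and> inp q (snd e1) = inp q (fst e2) \<and>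
        inp q (snd e2) = inp q (fst e3) \<and> inp q (snd e3) = inp q (fst e1)) (Tris q))"

definition notcan1 :: "(edge \<Rightarrow> bool) \<Rightarrow> bool" where
  "notcan1 P = list_all (\<lambda>q. bad1 q P) [Alice, Bob, Carol]"

definition bigcheck :: bool where
  "bigcheck = list_all (\<lambda>p. list_all (\<lambda>S.
      notcan1 (\<lambda>e. inp p (fst e) \<in> set S \<and> inp p (snd e) \<in> set S) \<or>
      notcan1 (\<lambda>e. inp p (fst e) \<notin> set S \<and> inp p (snd e) \<notin> set S)) (halfsubs (vals p))) [Alice, Bob, Carol]"

lemma bigcheck_ok: bigcheck by code_simp

lemma notcan1_True: "notcan1 (\<lambda>_. True)" by code_simp

definition bits :: "nat \<Rightarrow> bool list" where
  "bits n = [odd (n div 4), odd (n div 2), odd n]"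

definition flipb :: "bool \<Rightarrow> bool list \<Rightarrow> bool list" where
  "flipb b xs = map (\<lambda>x. x \<noteq> b) xs"

definition vcheck :: "vtx \<Rightarrow> bool" where
  "vcheck w = (let X = bits (fst w); Y = bits (fst (snd w)); Z = bits (fst (snd (snd w))) in
     list_all (\<lambda>i. xor3 (X!i) (Y!i) (Z!i) = False) [0..<3] \<and>
     odd (length (filter (\<lambda>i. \<not> X!i \<and> \<not> Y!i \<and> \<not> Z!i) [0..<3])) = val w)"

definition edgecheck :: bool where
  "edgecheck = list_all (\<lambda>e. fst (fst e) = fst (snd e) \<and> val (fst e) \<noteq> val (snd e) \<and>
      vcheck (fst e) \<and> vcheck (snd e)) allE"

lemma edgecheck_ok: edgecheck by code_simp

lemma halfsubs_ex:
  "\<exists>S\<in>set (halfsubs vs). (\<forall>w\<in>set vs. w \<in> set S \<longleftrightarrow> m w) \<or> (\<forall>w\<in>set vs. w \<in> set S \<longleftrightarrow> \<not> m w)"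
proof (cases vs)
  case Nil
  then show ?thesis by simp
next
  case (Cons v ws)
  show ?thesis
  proof (cases "m v")
    case True
    have "{w \<in> set ws. m w} \<subseteq> set ws" by auto
    then have "{w \<in> set ws. m w} \<in> set ` set (subseqs ws)" by (rule subset_subseqs)
    then obtain S' where S': "S' \<in> set (subseqs ws)" "set S' = {w \<in> set ws. m w}"
      by (metis (no_types, lifting) imageE)
    have "v # S' \<in> set (halfsubs vs)" using Cons S' by simp
    moreover have "\<forall>w\<in>set vs. w \<in> set (v # S') \<longleftrightarrow> m w" using Cons S' True by auto
    ultimately show ?thesis by blast
  next
    case False
    have "{w \<in> set ws. \<not> m w} \<subseteq> set ws" by auto
    then have "{w \<in> set ws. \<not> m w} \<in> set ` set (subseqs ws)" by (rule subset_subseqs)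
    then obtain S' where S': "S' \<in> set (subseqs ws)" "set S' = {w \<in> set ws. \<not> m w}"
      by (metis (no_types, lifting) imageE)
    have "v # S' \<in> set (halfsubs vs)" using Cons S' by simp
    moreover have "\<forall>w\<in>set vs. w \<in> set (v # S') \<longleftrightarrow> \<not> m w" using Cons S' False by auto
    ultimately show ?thesis by blast
  qed
qed

definition corr :: "nat protocol \<Rightarrow> vtx \<Rightarrow> bool" where
  "corr P w = (run P (fst w) (fst (snd w)) (fst (snd (snd w))) = val w)"

lemma corr_Send: "corr (Send p m P0 P1) w = (if m (inp p w) then corr P1 w else corr P0 w)"
  by (simp add: corr_def inp_def)

lemma exists_m:
  assumes "cost P \<le> 1"
  shows "\<exists>q m. \<forall>a b. corr P a \<longrightarrow> corr P b \<longrightarrow> fst a = fst b \<longrightarrow> val a \<noteq> val b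
           \<longrightarrow> m (inp q a) \<noteq> (m (inp q b) :: bool)"
proof (cases P)
  case (Output g)
  show ?thesis
    by (rule exI[of _ Alice], rule exI[of _ "\<lambda>_. True"]) (auto simp: Output corr_def)
next
  case (Send q m P0 P1)
  with assms have "cost P0 = 0" "cost P1 = 0" by auto
  then obtain g0 g1 where g: "P0 = Output g0" "P1 = Output g1"
    by (cases P0; cases P1; auto)
  show ?thesis
    by (rule exI[of _ q], rule exI[of _ m]) (auto simp: Send g corr_Send corr_def inp_def)
qed

lemma loops_in: "e \<in> set (Loops q) \<Longrightarrow> e \<in> set allE"
  unfolding allE_def by (cases q) (simp_all add: Loops_def)

lemma concat_tri_in: "(e1, e2, e3) \<in> set xs \<Longrightarrow>
   e1 \<in> set (concat (map (\<lambda>(a, b, c). [a, b, c]) xs)) \<and>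
   e2 \<in> set (concat (map (\<lambda>(a, b, c). [a, b, c]) xs)) \<and>
   e3 \<in> set (concat (map (\<lambda>(a, b, c). [a, b, c]) xs))"
  by (induction xs) auto

lemma tris_in: "(e1, e2, e3) \<in> set (Tris q) \<Longrightarrow> e1 \<in> set allE \<and> e2 \<in> set allE \<and> e3 \<in> set allE"
proof -
  assume a: "(e1, e2, e3) \<in> set (Tris q)"
  have "(e1, e2, e3) \<in> set (TB @ TC)"
    using a by (cases q) (simp_all add: Tris_def)
  from concat_tri_in[OF this] show ?thesis unfolding allE_def set_append by blast
qed

lemma L1:
  assumes c: "cost P \<le> 1" and ec: edgecheck
    and cor: "\<forall>e\<in>set allE. Q e \<longrightarrow> corr P (fst e) \<and> corr P (snd e)"
    and nc: "notcan1 Q"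
  shows False
proof -
  obtain q m where qm: "\<forall>a b. corr P a \<longrightarrow> corr P b \<longrightarrow> fst a = fst b \<longrightarrow> val a \<noteq> val b
           \<longrightarrow> m (inp q a) \<noteq> (m (inp q b) :: bool)"
    using exists_m[OF c] by blast
  have conf: "\<forall>e\<in>set allE. fst (fst e) = fst (snd e) \<and> val (fst e) \<noteq> val (snd e)"
    using ec by (auto simp: edgecheck_def list_all_iff)
  have H: "\<And>e. e \<in> set allE \<Longrightarrow> Q e \<Longrightarrow> m (inp q (fst e)) \<noteq> m (inp q (snd e))"
    using qm cor conf by blast
  have "bad1 q Q" using nc by (cases q) (auto simp: notcan1_def)
  then show False
  proof (unfold bad1_def, elim disjE)
    assume "list_ex (\<lambda>e. Q e \<and> inp q (fst e) = inp q (snd e)) (Loops q)"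
    then obtain e where "e \<in> set (Loops q)" "Q e" "inp q (fst e) = inp q (snd e)"
      by (auto simp: list_ex_iff)
    then show False using H loops_in by metis
  next
    assume "list_ex (\<lambda>(e1, e2, e3). Q e1 \<and> Q e2 \<and> Q e3 \<and> inp q (snd e1) = inp q (fst e2) \<and>
        inp q (snd e2) = inp q (fst e3) \<and> inp q (snd e3) = inp q (fst e1)) (Tris q)"
    then obtain e1 e2 e3 where t: "(e1, e2, e3) \<in> set (Tris q)" "Q e1" "Q e2" "Q e3"
      "inp q (snd e1) = inp q (fst e2)" "inp q (snd e2) = inp q (fst e3)" "inp q (snd e3) = inp q (fst e1)"
      by (auto simp: list_ex_iff)
    have "m (inp q (fst e1)) \<noteq> m (inp q (snd e1))" "m (inp q (fst e2)) \<noteq> m (inp q (snd e2))"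
      "m (inp q (fst e3)) \<noteq> m (inp q (snd e3))"
      using H tris_in[OF t(1)] t(2-4) by auto
    then show False using t(5-7) by metis
  qed
qed

lemma vals_in: "e \<in> set allE \<Longrightarrow> inp p (fst e) \<in> set (vals p) \<and> inp p (snd e) \<in> set (vals p)"
  by (auto simp: vals_def)

lemma L2:
  assumes c: "cost P \<le> 2"
    and cor: "\<forall>e\<in>set allE. corr P (fst e) \<and> corr P (snd e)"
  shows False
proof (cases P)
  case (Output g)
  have "cost P \<le> 1" using Output by simp
  moreover have "\<forall>e\<in>set allE. (\<lambda>_. True) e \<longrightarrow> corr P (fst e) \<and> corr P (snd e)" using cor by simp
  ultimately show False by (rule L1[OF _ edgecheck_ok _ notcan1_True])
next
  case (Send p m P0 P1)
  with c have c0: "cost P0 \<le> 1" and c1: "cost P1 \<le> 1" by auto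
  obtain S where S: "S \<in> set (halfsubs (vals p))"
    and H: "(\<forall>w\<in>set (vals p). w \<in> set S \<longleftrightarrow> m w) \<or> (\<forall>w\<in>set (vals p). w \<in> set S \<longleftrightarrow> \<not> m w)"
    using halfsubs_ex[of "vals p" m] by blast
  have "notcan1 (\<lambda>e. inp p (fst e) \<in> set S \<and> inp p (snd e) \<in> set S) \<or>
      notcan1 (\<lambda>e. inp p (fst e) \<notin> set S \<and> inp p (snd e) \<notin> set S)"
  proof -
    have all: "\<forall>p\<in>set [Alice, Bob, Carol]. \<forall>S\<in>set (halfsubs (vals p)).
      notcan1 (\<lambda>e. inp p (fst e) \<in> set S \<and> inp p (snd e) \<in> set S) \<or>
      notcan1 (\<lambda>e. inp p (fst e) \<notin> set S \<and> inp p (snd e) \<notin> set S)"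
      using bigcheck_ok unfolding bigcheck_def list_all_iff .
    have "p \<in> set [Alice, Bob, Carol]" by (cases p) simp_all
    with all S show ?thesis by blast
  qed
  then show False
  proof
    assume nc: "notcan1 (\<lambda>e. inp p (fst e) \<in> set S \<and> inp p (snd e) \<in> set S)"
    from H show False
    proof
      assume h: "\<forall>w\<in>set (vals p). w \<in> set S \<longleftrightarrow> m w"
      show False
      proof (rule L1[OF c1 edgecheck_ok _ nc], intro ballI impI)
        fix e assume e: "e \<in> set allE" "inp p (fst e) \<in> set S \<and> inp p (snd e) \<in> set S"
        have v: "inp p (fst e) \<in> set (vals p)" "inp p (snd e) \<in> set (vals p)"
          using vals_in[OF e(1)] by simp_all
        have ce: "corr P (fst e)" "corr P (snd e)" using cor e(1) by simp_all
        have mv: "m (inp p (fst e)) = True" "m (inp p (snd e)) = True"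
          using h v e(2) by simp_all
        show "corr P1 (fst e) \<and> corr P1 (snd e)"
          using ce mv unfolding Send corr_Send by simp
      qed
    next
      assume h: "\<forall>w\<in>set (vals p). w \<in> set S \<longleftrightarrow> \<not> m w"
      show False
      proof (rule L1[OF c0 edgecheck_ok _ nc], intro ballI impI)
        fix e assume e: "e \<in> set allE" "inp p (fst e) \<in> set S \<and> inp p (snd e) \<in> set S"
        have v: "inp p (fst e) \<in> set (vals p)" "inp p (snd e) \<in> set (vals p)"
          using vals_in[OF e(1)] by simp_all
        have ce: "corr P (fst e)" "corr P (snd e)" using cor e(1) by simp_all
        have mv: "m (inp p (fst e)) = False" "m (inp p (snd e)) = False"
          using h v e(2) by simp_all
        show "corr P0 (fst e) \<and> corr P0 (snd e)"
          using ce mv unfolding Send corr_Send by simp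
      qed
    qed
  next
    assume nc: "notcan1 (\<lambda>e. inp p (fst e) \<notin> set S \<and> inp p (snd e) \<notin> set S)"
    from H show False
    proof
      assume h: "\<forall>w\<in>set (vals p). w \<in> set S \<longleftrightarrow> m w"
      show False
      proof (rule L1[OF c0 edgecheck_ok _ nc], intro ballI impI)
        fix e assume e: "e \<in> set allE" "inp p (fst e) \<notin> set S \<and> inp p (snd e) \<notin> set S"
        have v: "inp p (fst e) \<in> set (vals p)" "inp p (snd e) \<in> set (vals p)"
          using vals_in[OF e(1)] by simp_all
        have ce: "corr P (fst e)" "corr P (snd e)" using cor e(1) by simp_all
        have mv: "m (inp p (fst e)) = False" "m (inp p (snd e)) = False"
          using h v e(2) by simp_all
        show "corr P0 (fst e) \<and> corr P0 (snd e)"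
          using ce mv unfolding Send corr_Send by simp
      qed
    next
      assume h: "\<forall>w\<in>set (vals p). w \<in> set S \<longleftrightarrow> \<not> m w"
      show False
      proof (rule L1[OF c1 edgecheck_ok _ nc], intro ballI impI)
        fix e assume e: "e \<in> set allE" "inp p (fst e) \<notin> set S \<and> inp p (snd e) \<notin> set S"
        have v: "inp p (fst e) \<in> set (vals p)" "inp p (snd e) \<in> set (vals p)"
          using vals_in[OF e(1)] by simp_all
        have ce: "corr P (fst e)" "corr P (snd e)" using cor e(1) by simp_all
        have mv: "m (inp p (fst e)) = True" "m (inp p (snd e)) = True"
          using h v e(2) by simp_all
        show "corr P1 (fst e) \<and> corr P1 (snd e)"
          using ce mv unfolding Send corr_Send by simp
      qed
    qed
  qed
qed


fun tp :: "(nat \<Rightarrow> bool list) \<Rightarrow> (nat \<Rightarrow> bool list) \<Rightarrow> (nat \<Rightarrow> bool list) \<Rightarrow>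
    bool list protocol \<Rightarrow> nat protocol" where
  "tp dA dB dC (Output g) = Output (g \<circ> dA)"
| "tp dA dB dC (Send p m P0 P1) = Send p (m \<circ> input_of p dA dB dC) (tp dA dB dC P0) (tp dA dB dC P1)"

lemma run_tp: "run (tp dA dB dC P) a b c = run P (dA a) (dB b) (dC c)"
proof (induction P)
  case (Output g)
  then show ?case by simp
next
  case (Send p m P0 P1)
  have "input_of p dA dB dC (input_of p a b c) = input_of p (dA a) (dB b) (dC c)"
    by (cases p) (simp_all add: input_of_def)
  with Send show ?case by simp
qed

lemma cost_tp: "cost (tp dA dB dC P) = cost P"
  by (induction P) simp_all

lemma card_filter_upt: "card {i. i < n \<and> Q i} = length (filter Q [0..<n])"
proof -
  have "set (filter Q [0..<n]) = {i. i < n \<and> Q i}" by auto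
  moreover have "distinct (filter Q [0..<n])" by simp
  ultimately show ?thesis using distinct_card by metis
qed

lemma xor_flip: "xor3 (x \<noteq> a) (y \<noteq> b) (z \<noteq> c) = xor3 a b c \<longleftrightarrow> \<not> xor3 x y z"
  by (cases x; cases y; cases z; cases a; cases b; cases c) (simp_all add: xor3_def)

lemma vcheck_sound:
  assumes "vcheck w"
  shows "promise u 3 (flipb (fst u) (bits (fst w))) (flipb (fst (snd u)) (bits (fst (snd w))))
            (flipb (snd (snd u)) (bits (fst (snd (snd w)))))
       \<and> f u (flipb (fst u) (bits (fst w))) (flipb (fst (snd u)) (bits (fst (snd w))))
            (flipb (snd (snd u)) (bits (fst (snd (snd w))))) = val w"
proof -
  define X where "X = bits (fst w)"
  define Y where "Y = bits (fst (snd w))"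
  define Z where "Z = bits (fst (snd (snd w)))"
  have len: "length X = 3" "length Y = 3" "length Z = 3" by (simp_all add: X_def Y_def Z_def bits_def)
  have c1: "\<forall>i<3. xor3 (X!i) (Y!i) (Z!i) = False"
    and c2: "odd (length (filter (\<lambda>i. \<not> X!i \<and> \<not> Y!i \<and> \<not> Z!i) [0..<3])) = val w"
    using assms by (auto simp: vcheck_def Let_def list_all_iff X_def Y_def Z_def)
  obtain u1 u2 u3 where u: "u = (u1, u2, u3)" by (cases u) auto
  have p: "promise u 3 (flipb u1 X) (flipb u2 Y) (flipb u3 Z)"
    using c1 len by (auto simp: promise_def flipb_def u xor3_def)
  have "{i. i < length (flipb u1 X) \<and> (flipb u1 X ! i, flipb u2 Y ! i, flipb u3 Z ! i) = u}
      = {i. i < 3 \<and> (\<not> X!i \<and> \<not> Y!i \<and> \<not> Z!i)}"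
    using len by (auto simp: flipb_def u)
  then have "f u (flipb u1 X) (flipb u2 Y) (flipb u3 Z) = val w"
    using c2 by (simp add: f_def card_filter_upt)
  with p show ?thesis by (simp add: u X_def Y_def Z_def)
qed

lemma lower:
  assumes c: "cost P \<le> 2" and comp: "computes u 3 P"
  shows False
proof -
  define dA where "dA = (\<lambda>n. flipb (fst u) (bits n))"
  define dB where "dB = (\<lambda>n. flipb (fst (snd u)) (bits n))"
  define dC where "dC = (\<lambda>n. flipb (snd (snd u)) (bits n))"
  have ok: "corr (tp dA dB dC P) w" if "vcheck w" for w
  proof -
    from vcheck_sound[OF that, of u] comp show ?thesis
      by (simp add: corr_def run_tp computes_def dA_def dB_def dC_def)
  qed
  have vc: "\<forall>e\<in>set allE. vcheck (fst e) \<and> vcheck (snd e)"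
    using edgecheck_ok unfolding edgecheck_def list_all_iff by blast
  show False
  proof (rule L2[of "tp dA dB dC P"])
    show "cost (tp dA dB dC P) \<le> 2" using c by (simp add: cost_tp)
    show "\<forall>e\<in>set allE. corr (tp dA dB dC P) (fst e) \<and> corr (tp dA dB dC P) (snd e)"
      using vc ok by blast
  qed
qed

definition wt :: "bool \<Rightarrow> bool list \<Rightarrow> nat" where
  "wt b X = length (filter (\<lambda>x. x \<noteq> b) X)"

definition outp :: "bool \<times> bool \<times> bool \<Rightarrow> nat \<Rightarrow> bool \<Rightarrow> bool \<Rightarrow> bool \<Rightarrow> bool list \<Rightarrow> bool" where
  "outp u n b0 b1 c1 X = (let a = wt (fst u) X; bm = 2 * of_bool b1 + of_bool b0;
      cm = 2 * of_bool c1 + of_bool (odd (a + of_bool b0)) in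
      odd n \<noteq> ((a + bm + cm) mod 4 = (2::nat)))"

definition prot :: "bool \<times> bool \<times> bool \<Rightarrow> nat \<Rightarrow> bool list protocol" where
  "prot u n = Send Bob (\<lambda>Y. odd (wt (fst (snd u)) Y))
     (Send Bob (\<lambda>Y. odd (wt (fst (snd u)) Y div 2))
        (Send Carol (\<lambda>Z. odd (wt (snd (snd u)) Z div 2))
           (Output (outp u n False False False)) (Output (outp u n False False True)))
        (Send Carol (\<lambda>Z. odd (wt (snd (snd u)) Z div 2))
           (Output (outp u n False True False)) (Output (outp u n False True True))))
     (Send Bob (\<lambda>Y. odd (wt (fst (snd u)) Y div 2))
        (Send Carol (\<lambda>Z. odd (wt (snd (snd u)) Z div 2))
           (Output (outp u n True False False)) (Output (outp u n True False True)))
        (Send Carol (\<lambda>Z. odd (wt (snd (snd u)) Z div 2))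
           (Output (outp u n True True False)) (Output (outp u n True True True))))"

lemma cost_prot: "cost (prot u n) = 3"
  by (simp add: prot_def)

lemma run_prot: "run (prot u n) X Y Z =
   outp u n (odd (wt (fst (snd u)) Y)) (odd (wt (fst (snd u)) Y div 2)) (odd (wt (snd (snd u)) Z div 2)) X"
  by (simp add: prot_def input_of_def)

lemma card_sum: "card {i. i < (n::nat) \<and> Q i} = (\<Sum>i<n. if Q i then 1 else (0::nat))"
proof -
  have e: "{i. i < n \<and> Q i} = {i \<in> {..<n}. Q i}" by auto
  have "(\<Sum>i<n. if Q i then 1 else (0::nat)) = (\<Sum>i\<in>{i \<in> {..<n}. Q i}. 1)"
    by (rule sum.inter_filter[symmetric]) simp
  then show ?thesis unfolding e by simp
qed

lemma wt_sum: "wt b X = (\<Sum>i<length X. if X ! i \<noteq> b then 1 else 0)"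
  unfolding wt_def length_filter_conv_card card_sum ..

lemma count_eq:
  assumes "promise u n X Y Z"
  shows "wt (fst u) X + wt (fst (snd u)) Y + wt (snd (snd u)) Z
     + 2 * card {i. i < length X \<and> (X ! i, Y ! i, Z ! i) = u} = 2 * n"
proof -
  obtain u1 u2 u3 where u: "u = (u1, u2, u3)" by (cases u) auto
  have len: "length X = n" "length Y = n" "length Z = n"
    and pr: "\<forall>i<n. xor3 (X ! i) (Y ! i) (Z ! i) = xor3 u1 u2 u3"
    using assms by (auto simp: promise_def u)
  have "wt u1 X + wt u2 Y + wt u3 Z + 2 * card {i. i < length X \<and> (X ! i, Y ! i, Z ! i) = u}
     = (\<Sum>i<n. (if X ! i \<noteq> u1 then 1 else 0) + (if Y ! i \<noteq> u2 then 1 else 0)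
          + (if Z ! i \<noteq> u3 then 1 else 0) + 2 * (if (X ! i, Y ! i, Z ! i) = u then 1 else 0))"
    unfolding wt_sum card_sum len by (simp add: sum.distrib sum_distrib_left)
  also have "\<dots> = (\<Sum>i<n. 2)"
  proof (rule sum.cong)
    fix i assume "i \<in> {..<n}"
    then have "xor3 (X ! i) (Y ! i) (Z ! i) = xor3 u1 u2 u3" using pr by auto
    then show "(if X ! i \<noteq> u1 then 1 else 0) + (if Y ! i \<noteq> u2 then 1 else 0)
          + (if Z ! i \<noteq> u3 then 1 else 0) + 2 * (if (X ! i, Y ! i, Z ! i) = u then 1 else 0) = (2::nat)"
      by (cases "X ! i"; cases "Y ! i"; cases "Z ! i"; cases u1; cases u2; cases u3)
         (simp_all add: xor3_def u)
  qed simp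
  finally show ?thesis by (simp add: u)
qed

lemma t1: fixes a b c N n :: nat assumes h: "a + b + c + 2 * N = 2 * n"
  shows "(a + b mod 2) mod 2 = c mod 2"
proof -
  have "(a + b mod 2) mod 2 = (a + b) mod 2" by (simp add: mod_add_right_eq)
  moreover have "even (a + b + c)" using h by (metis dvd_add_left_iff dvd_triv_left)
  ultimately show ?thesis by (metis even_add mod2_eq_if odd_iff_mod_2_eq_one)
qed
lemma t2: fixes c :: nat shows "2 * ((c div 2) mod 2) + c mod 2 = c mod 4"
  using mod_mult2_eq[of c 2 2] by simp
lemma t3: fixes a b c N n :: nat assumes h: "a + b + c + 2 * N = 2 * n"
  shows "(odd n \<noteq> ((a + b mod 4 + c mod 4) mod 4 = 2)) = odd N"
proof -
  define k where "k = n - N"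
  have s: "a + b + c = 2 * k" and nk: "n = k + N" using h by (simp_all add: k_def)
  have "(a + b mod 4 + c mod 4) mod 4 = (a + b mod 4 + c) mod 4" by (rule mod_add_right_eq)
  also have "\<dots> = ((a + c) + b mod 4) mod 4" by (simp add: ac_simps)
  also have "\<dots> = (a + c + b) mod 4" by (rule mod_add_right_eq)
  also have "\<dots> = (a + b + c) mod 4" by (simp add: ac_simps)
  also have "\<dots> = 2 * (k mod 2)" unfolding s using mod_mult_mult1[of 2 k 2] by simp
  finally have e: "(a + b mod 4 + c mod 4) mod 4 = 2 * (k mod 2)" .
  have "((a + b mod 4 + c mod 4) mod 4 = 2) = odd k" unfolding e by (simp add: odd_iff_mod_2_eq_one)
  then show ?thesis unfolding nk by auto
qed
lemma arith_key:
  fixes a b c N n :: nat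
  assumes h: "a + b + c + 2 * N = 2 * n"
  shows "(odd n \<noteq> ((a + (2 * of_bool (odd (b div 2)) + of_bool (odd b))
      + (2 * of_bool (odd (c div 2)) + of_bool (odd (a + of_bool (odd b))))) mod 4 = (2::nat)))
    = odd N"
proof -
  have hb: "2 * of_bool (odd (b div 2)) + of_bool (odd b) = b mod (4::nat)"
    unfolding of_bool_odd_eq_mod_2 by (rule t2)
  have hc: "2 * of_bool (odd (c div 2)) + of_bool (odd (a + of_bool (odd b))) = c mod (4::nat)"
  proof -
    have e1: "(of_bool (odd (a + of_bool (odd b))) :: nat) = c mod 2"
      by (simp only: of_bool_odd_eq_mod_2 t1[OF h])
    have e2: "(of_bool (odd (c div 2)) :: nat) = (c div 2) mod 2"
      by (rule of_bool_odd_eq_mod_2)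
    show ?thesis unfolding e1 e2 by (rule t2)
  qed
  show ?thesis unfolding hb hc by (rule t3[OF h])
qed

lemma upper: "computes u n (prot u n)"
  unfolding computes_def
proof (intro allI impI)
  fix X Y Z assume p: "promise u n X Y Z"
  have "outp u n (odd (wt (fst (snd u)) Y)) (odd (wt (fst (snd u)) Y div 2))
      (odd (wt (snd (snd u)) Z div 2)) X = odd (card {i. i < length X \<and> (X ! i, Y ! i, Z ! i) = u})"
    unfolding outp_def Let_def by (rule arith_key[OF count_eq[OF p]])
  then show "run (prot u n) X Y Z = f u X Y Z"
    unfolding run_prot f_def .
qed

theorem theorem3:
  fixes u :: "bool \<times> bool \<times> bool"
  shows "(\<forall>n\<ge>1. \<exists>P. cost P \<le> 3 \<and> computes u n P)
       \<and> \<not> (\<forall>n\<ge>1. \<exists>P. cost P \<le> 2 \<and> computes u n P)"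
proof
  show "\<forall>n\<ge>1. \<exists>P. cost P \<le> 3 \<and> computes u n P"
    using cost_prot upper by (metis order_refl)
  show "\<not> (\<forall>n\<ge>1. \<exists>P. cost P \<le> 2 \<and> computes u n P)"
  proof
    assume h: "\<forall>n\<ge>1. \<exists>P. cost P \<le> 2 \<and> computes u n P"
    have "(3::nat) \<ge> 1" by simp
    with h obtain P where "cost P \<le> 2" "computes u 3 P" by blast
    then show False by (rule lower)
  qed
qed

end
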